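(* Let $D$ be a finite nonempty set of integers. There exists a signed tree $(T,s)$ that realizes $D$ if and only if $-1\in D$ or $1\in D$.
   Context: A signed graph is a pair $(G,s)$ where $G$ is a finite simple undirected graph and $s:E(G)\to\{+,-\}$; a signed tree is a signed graph whose underlying graph is a tree. The signed degree $sdeg(v)$ of a vertex $v$ is the number of positive edges incident to $v$ minus the number of negative edges incident to $v$. $(G,s)$ realizes (satisfies) $D$ if $D=\{sdeg(v): v\in V(G)\}$. *)

theory Defs
  imports Main
begin

definition simple_graph :: "nat set \<Rightarrow> nat set set \<Rightarrow> bool" where
  "simple_graph V E \<longleftrightarrow> finite V \<and>
     (\<forall>e\<in>E. \<exists>u v. e = {u, v} \<and> u \<noteq> v \<and> u \<in> V \<and> v \<in> V)"

definition adj :: "nat set set \<Rightarrow> nat \<Rightarrow> nat \<Rightarrow> bool" where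
  "adj E u v \<longleftrightarrow> {u, v} \<in> E"

definition connected_graph :: "nat set \<Rightarrow> nat set set \<Rightarrow> bool" where
  "connected_graph V E \<longleftrightarrow> (\<forall>u\<in>V. \<forall>v\<in>V. (u, v) \<in> {(x, y). adj E x y}\<^sup>*)"

definition is_cycle :: "nat set set \<Rightarrow> nat list \<Rightarrow> bool" where
  "is_cycle E cs \<longleftrightarrow> length cs \<ge> 3 \<and> distinct cs \<and>
     (\<forall>i. Suc i < length cs \<longrightarrow> adj E (cs ! i) (cs ! Suc i)) \<and>
     adj E (last cs) (hd cs)"

definition acyclic_graph :: "nat set set \<Rightarrow> bool" where
  "acyclic_graph E \<longleftrightarrow> \<not> (\<exists>cs. is_cycle E cs)"

definition is_tree :: "nat set \<Rightarrow> nat set set \<Rightarrow> bool" where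
  "is_tree V E \<longleftrightarrow> simple_graph V E \<and> V \<noteq> {} \<and> connected_graph V E \<and> acyclic_graph E"

text \<open>Signature s: True = positive edge, False = negative edge.\<close>
definition sdeg :: "nat set set \<Rightarrow> (nat set \<Rightarrow> bool) \<Rightarrow> nat \<Rightarrow> int" where
  "sdeg E s v = int (card {e\<in>E. v \<in> e \<and> s e}) - int (card {e\<in>E. v \<in> e \<and> \<not> s e})"

definition realizes :: "nat set \<Rightarrow> nat set set \<Rightarrow> (nat set \<Rightarrow> bool) \<Rightarrow> int set \<Rightarrow> bool" where
  "realizes V E s D \<longleftrightarrow> D = sdeg E s ` V"

end

theory Submission
  imports Defs
begin

lemma sg_edge_sub: "simple_graph V E \<Longrightarrow> e \<in> E \<Longrightarrow> e \<subseteq> V"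
proof -
  assume a: "simple_graph V E" "e \<in> E"
  then obtain u v where "e = {u,v}" "u \<in> V" "v \<in> V" unfolding simple_graph_def by meson
  then show "e \<subseteq> V" by simp
qed
lemma sg_edge_in: "simple_graph V E \<Longrightarrow> e \<in> E \<Longrightarrow> x \<in> e \<Longrightarrow> x \<in> V"
  using sg_edge_sub by blast
lemma sg_finite_E: "simple_graph V E \<Longrightarrow> finite E"
proof -
  assume a: "simple_graph V E"
  have "E \<subseteq> Pow V" using a sg_edge_sub by blast
  moreover have "finite (Pow V)" using a unfolding simple_graph_def by simp
  ultimately show ?thesis by (rule finite_subset)
qed
lemma adj_sym: "adj E a b = adj E b a"
  unfolding adj_def by (simp add: insert_commute)

lemma cycle_next:
  assumes "is_cycle E cs" "i < length cs"
  shows "adj E (cs!i) (cs!((i+1) mod length cs))"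
proof (cases "Suc i < length cs")
  case True
  then show ?thesis using assms unfolding is_cycle_def by simp
next
  case False
  then have i: "i = length cs - 1" using assms by simp
  have ne: "cs \<noteq> []" using assms by auto
  have "(i+1) mod length cs = 0" using i ne by simp
  moreover have "cs ! i = last cs" using i ne by (simp add: last_conv_nth)
  moreover have "cs ! 0 = hd cs" using ne by (simp add: hd_conv_nth)
  ultimately show ?thesis using assms unfolding is_cycle_def by simp
qed

lemma aux_mod1: "0 < (i::nat) \<Longrightarrow> i < n \<Longrightarrow> (i + n - 1) mod n = i - 1"
proof -
  assume a: "0 < i" "i < n"
  have "i + n - 1 = (i - 1) + n" using a by simp
  then have "(i + n - 1) mod n = (i - 1) mod n" by simp
  also have "... = i - 1" using a by simp
  finally show ?thesis .
qed

lemma add_tree: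
  assumes T: "is_tree V E" and v: "v \<in> V" and w: "w \<notin> V"
  shows "is_tree (insert w V) (insert {v,w} E)"
proof -
  let ?E = "insert {v,w} E"
  have sg: "simple_graph V E" using T unfolding is_tree_def by simp
  have vw: "v \<noteq> w" using v w by auto
  have sg': "simple_graph (insert w V) ?E"
    unfolding simple_graph_def
  proof (intro conjI ballI)
    show "finite (insert w V)" using sg unfolding simple_graph_def by simp
    fix e assume e: "e \<in> ?E"
    show "\<exists>a b. e = {a, b} \<and> a \<noteq> b \<and> a \<in> insert w V \<and> b \<in> insert w V"
    proof (cases "e = {v,w}")
      case True then show ?thesis using vw v by blast
    next
      case False
      then have "e \<in> E" using e by simp
      then obtain a b where "e = {a, b}" "a \<noteq> b" "a \<in> V" "b \<in> V"
        using sg unfolding simple_graph_def by meson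
      then show ?thesis by blast
    qed
  qed
  let ?R = "{(x, y). adj E x y}"
  let ?R' = "{(x, y). adj ?E x y}"
  have sub: "?R \<subseteq> ?R'" unfolding adj_def by auto
  have con: "connected_graph V E" using T unfolding is_tree_def by simp
  have old: "(a,b) \<in> ?R'\<^sup>*" if "a \<in> V" "b \<in> V" for a b
    using con that rtrancl_mono[OF sub] unfolding connected_graph_def by blast
  have wv: "(w,v) \<in> ?R'" "(v,w) \<in> ?R'" unfolding adj_def by (auto simp: insert_commute)
  have con': "connected_graph (insert w V) ?E"
    unfolding connected_graph_def
  proof (intro ballI)
    fix a b assume a: "a \<in> insert w V" and b: "b \<in> insert w V"
    have av: "(a,v) \<in> ?R'\<^sup>*"
      using a old[OF _ v] wv by blast
    have vb: "(v,b) \<in> ?R'\<^sup>*"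
      using b old[OF v] wv by blast
    show "(a,b) \<in> ?R'\<^sup>*" using av vb by (rule rtrancl_trans)
  qed
  have nbr: "y = v" if "adj ?E w y" for y
  proof -
    have "{w,y} \<in> ?E" using that unfolding adj_def by simp
    moreover have "{w,y} \<notin> E" using sg_edge_in[OF sg, of "{w,y}" w] w by blast
    ultimately have "{w,y} = {v,w}" by simp
    then show ?thesis using vw by (auto simp: doubleton_eq_iff)
  qed
  have oldadj: "adj E a b" if "adj ?E a b" "a \<noteq> w" "b \<noteq> w" for a b
    using that unfolding adj_def by auto
  have ac: "acyclic_graph E" using T unfolding is_tree_def by simp
  have ac': "acyclic_graph ?E"
    unfolding acyclic_graph_def
  proof
    assume "\<exists>cs. is_cycle ?E cs"
    then obtain cs where cy: "is_cycle ?E cs" by blast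
    let ?n = "length cs"
    have n3: "?n \<ge> 3" and dist: "distinct cs" using cy unfolding is_cycle_def by auto
    have npos: "0 < ?n" using n3 by linarith
    show False
    proof (cases "w \<in> set cs")
      case True
      then obtain i where i: "i < ?n" "cs ! i = w" by (auto simp: in_set_conv_nth)
      define j where "j = (i + ?n - 1) mod ?n"
      have jn: "j < ?n" unfolding j_def by (rule mod_less_divisor[OF npos])
      have j1: "(j+1) mod ?n = i"
      proof (cases "i = 0")
        case True
        then show ?thesis unfolding j_def using n3 npos by simp
      next
        case False
        then have "j = i - 1" unfolding j_def using i aux_mod1 by simp
        then show ?thesis using False i by simp
      qed
      have "adj ?E (cs!j) w" using cycle_next[OF cy jn] j1 i by simp
      then have a1: "cs!j = v" using nbr adj_sym by metis
      have "adj ?E w (cs!((i+1) mod ?n))" using cycle_next[OF cy i(1)] i by simp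
      then have a2: "cs!((i+1) mod ?n) = v" using nbr by blast
      have "(i+1) mod ?n < ?n" using n3 npos by simp
      then have eq: "j = (i+1) mod ?n" using a1 a2 jn dist nth_eq_iff_index_eq by metis
      show False
      proof (cases "i = 0")
        case True
        then show False using eq n3 npos unfolding j_def by simp
      next
        case False
        then have jj: "j = i - 1" unfolding j_def using i aux_mod1 by simp
        show False
        proof (cases "Suc i < ?n")
          case True
          then show False using eq jj by simp
        next
          case False
          then have "i + 1 = ?n" using i by simp
          then show False using eq jj n3 by simp
        qed
      qed
    next
      case False
      have ne: "cs \<noteq> []" using n3 by auto
      have "is_cycle E cs"
        unfolding is_cycle_def
      proof (intro conjI allI impI)
        show "3 \<le> ?n" by (rule n3)
        show "distinct cs" by (rule dist)
        fix i assume si: "Suc i < ?n"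
        have "adj ?E (cs!i) (cs!Suc i)" using cy si unfolding is_cycle_def by simp
        moreover have "cs!i \<noteq> w" "cs!Suc i \<noteq> w" using False si nth_mem
          by (metis Suc_lessD)+
        ultimately show "adj E (cs!i) (cs!Suc i)" using oldadj by blast
      next
        have "adj ?E (last cs) (hd cs)" using cy unfolding is_cycle_def by simp
        moreover have "last cs \<noteq> w" "hd cs \<noteq> w" using False ne last_in_set hd_in_set by metis+
        ultimately show "adj E (last cs) (hd cs)" using oldadj by blast
      qed
      then show False using ac unfolding acyclic_graph_def by blast
    qed
  qed
  show ?thesis using sg' con' ac' unfolding is_tree_def by simp
qed

lemma set_split_pos:
  "{v,w} \<notin> E \<Longrightarrow> {e \<in> insert {v,w} E. P e \<and> (s({v,w}:=b)) e} =
    (if P {v,w} \<and> b then insert {v,w} {e\<in>E. P e \<and> s e} else {e\<in>E. P e \<and> s e})"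
  by (auto split: if_splits)

lemma set_split_neg:
  "{v,w} \<notin> E \<Longrightarrow> {e \<in> insert {v,w} E. P e \<and> \<not> (s({v,w}:=b)) e} =
    (if P {v,w} \<and> \<not> b then insert {v,w} {e\<in>E. P e \<and> \<not> s e} else {e\<in>E. P e \<and> \<not> s e})"
  by (auto split: if_splits)

lemma leaf_step:
  assumes T: "is_tree V E" and v: "v \<in> V"
  shows "\<exists>w E' s'. w \<notin> V \<and> is_tree (insert w V) E' \<and>
     (\<forall>x\<in>V-{v}. sdeg E' s' x = sdeg E s x) \<and>
     sdeg E' s' v = sdeg E s v + (if b then 1 else -1) \<and>
     sdeg E' s' w = (if b then 1 else -1)"
proof -
  have sg: "simple_graph V E" using T unfolding is_tree_def by simp
  have fV: "finite V" using sg unfolding simple_graph_def by simp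
  have fE: "finite E" using sg by (rule sg_finite_E)
  obtain w where w: "w \<notin> V" using ex_new_if_finite[OF infinite_UNIV_nat fV] by blast
  have vw: "v \<noteq> w" using v w by auto
  have nE: "{v,w} \<notin> E" using sg_edge_in[OF sg, of "{v,w}" w] w by blast
  let ?E = "insert {v,w} E"
  let ?s = "s({v,w}:=b)"
  have T': "is_tree (insert w V) ?E" by (rule add_tree[OF T v w])
  have other: "sdeg ?E ?s x = sdeg E s x" if "x \<in> V-{v}" for x
  proof -
    have "x \<notin> {v,w}" using that w by auto
    then show ?thesis unfolding sdeg_def
      using set_split_pos[OF nE, of "\<lambda>e. x \<in> e" s b] set_split_neg[OF nE, of "\<lambda>e. x \<in> e" s b]
      by simp
  qed
  have f1: "finite {e\<in>E. v \<in> e \<and> s e}" "finite {e\<in>E. v \<in> e \<and> \<not> s e}" using fE by auto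
  have n1: "{v,w} \<notin> {e\<in>E. v \<in> e \<and> s e}" "{v,w} \<notin> {e\<in>E. v \<in> e \<and> \<not> s e}" using nE by auto
  have vdeg: "sdeg ?E ?s v = sdeg E s v + (if b then 1 else -1)"
    unfolding sdeg_def
    using set_split_pos[OF nE, of "\<lambda>e. v \<in> e" s b] set_split_neg[OF nE, of "\<lambda>e. v \<in> e" s b]
      card_insert_disjoint[OF f1(1) n1(1)] card_insert_disjoint[OF f1(2) n1(2)]
    by simp
  have em: "{e\<in>E. w \<in> e \<and> s e} = {}" "{e\<in>E. w \<in> e \<and> \<not> s e} = {}"
    using sg_edge_in[OF sg] w by blast+
  have wdeg: "sdeg ?E ?s w = (if b then 1 else -1)"
    unfolding sdeg_def set_split_pos[OF nE] set_split_neg[OF nE] em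
    by simp
  show ?thesis using w T' other vdeg wdeg by blast
qed

lemma grow_pos:
  assumes T: "is_tree V E" and c: "c \<in> V"
  shows "\<exists>V' E' s'. is_tree V' E' \<and> V \<subseteq> V' \<and> (\<forall>x\<in>V-{c}. sdeg E' s' x = sdeg E s x) \<and>
     sdeg E' s' c = sdeg E s c + int n \<and> (\<forall>x\<in>V'-V. sdeg E' s' x = 1)"
proof (induction n)
  case 0
  show ?case using T by auto
next
  case (Suc n)
  then obtain V1 E1 s1 where T1: "is_tree V1 E1" "V \<subseteq> V1" "\<forall>x\<in>V-{c}. sdeg E1 s1 x = sdeg E s x"
    "sdeg E1 s1 c = sdeg E s c + int n" "\<forall>x\<in>V1-V. sdeg E1 s1 x = 1" by blast
  have c1: "c \<in> V1" using T1(2) c by blast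
  obtain w E2 s2 where S: "w \<notin> V1" "is_tree (insert w V1) E2"
     "\<forall>x\<in>V1-{c}. sdeg E2 s2 x = sdeg E1 s1 x"
     "sdeg E2 s2 c = sdeg E1 s1 c + 1" "sdeg E2 s2 w = 1"
    using leaf_step[OF T1(1) c1, of s1 True] by auto
  have "V \<subseteq> insert w V1" using T1(2) by blast
  moreover have "\<forall>x\<in>V-{c}. sdeg E2 s2 x = sdeg E s x"
  proof
    fix x assume x: "x \<in> V-{c}"
    then have "x \<in> V1-{c}" using T1(2) by blast
    then show "sdeg E2 s2 x = sdeg E s x" using S(3) T1(3) x by simp
  qed
  moreover have "sdeg E2 s2 c = sdeg E s c + int (Suc n)" using S(4) T1(4) by simp
  moreover have "\<forall>x\<in>insert w V1 - V. sdeg E2 s2 x = 1"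
  proof
    fix x assume x: "x \<in> insert w V1 - V"
    show "sdeg E2 s2 x = 1"
    proof (cases "x = w")
      case True then show ?thesis using S(5) by simp
    next
      case False
      then have "x \<in> V1 - {c}" "x \<in> V1 - V" using x c by auto
      then show ?thesis using S(3) T1(5) by simp
    qed
  qed
  ultimately show ?case using S(2) by blast
qed

lemma grow_neg:
  assumes T: "is_tree V E" and c: "c \<in> V"
  shows "\<exists>V' E' s'. is_tree V' E' \<and> V \<subseteq> V' \<and> (\<forall>x\<in>V-{c}. sdeg E' s' x = sdeg E s x) \<and>
     sdeg E' s' c = sdeg E s c - int n \<and> (\<forall>x\<in>V'-V. sdeg E' s' x = 1)"
proof (induction n)
  case 0
  show ?case using T by auto
next
  case (Suc n)
  then obtain V1 E1 s1 where T1: "is_tree V1 E1" "V \<subseteq> V1" "\<forall>x\<in>V-{c}. sdeg E1 s1 x = sdeg E s x"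
    "sdeg E1 s1 c = sdeg E s c - int n" "\<forall>x\<in>V1-V. sdeg E1 s1 x = 1" by blast
  have c1: "c \<in> V1" using T1(2) c by blast
  obtain u E2 s2 where S: "u \<notin> V1" "is_tree (insert u V1) E2"
     "\<forall>x\<in>V1-{c}. sdeg E2 s2 x = sdeg E1 s1 x"
     "sdeg E2 s2 c = sdeg E1 s1 c - 1" "sdeg E2 s2 u = -1"
    using leaf_step[OF T1(1) c1, of s1 False] by auto
  have u2: "u \<in> insert u V1" by simp
  obtain w1 E3 s3 where S3: "w1 \<notin> insert u V1" "is_tree (insert w1 (insert u V1)) E3"
     "\<forall>x\<in>insert u V1-{u}. sdeg E3 s3 x = sdeg E2 s2 x"
     "sdeg E3 s3 u = sdeg E2 s2 u + 1" "sdeg E3 s3 w1 = 1"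
    using leaf_step[OF S(2) u2, of s2 True] by auto
  have u3: "u \<in> insert w1 (insert u V1)" by simp
  obtain w2 E4 s4 where S4: "w2 \<notin> insert w1 (insert u V1)" "is_tree (insert w2 (insert w1 (insert u V1))) E4"
     "\<forall>x\<in>insert w1 (insert u V1)-{u}. sdeg E4 s4 x = sdeg E3 s3 x"
     "sdeg E4 s4 u = sdeg E3 s3 u + 1" "sdeg E4 s4 w2 = 1"
    using leaf_step[OF S3(2) u3, of s3 True] by auto
  let ?V = "insert w2 (insert w1 (insert u V1))"
  have dV1: "\<forall>x\<in>V1. sdeg E4 s4 x = sdeg E2 s2 x"
  proof
    fix x assume x: "x \<in> V1"
    then have "x \<noteq> u" "x \<noteq> w1" using S(1) S3(1) by auto
    then show "sdeg E4 s4 x = sdeg E2 s2 x" using S3(3) S4(3) x by simp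
  qed
  have "V \<subseteq> ?V" using T1(2) by blast
  moreover have "\<forall>x\<in>V-{c}. sdeg E4 s4 x = sdeg E s x"
  proof
    fix x assume x: "x \<in> V-{c}"
    then have "x \<in> V1-{c}" using T1(2) by blast
    then show "sdeg E4 s4 x = sdeg E s x" using dV1 S(3) T1(3) x by simp
  qed
  moreover have "sdeg E4 s4 c = sdeg E s c - int (Suc n)" using dV1 c1 S(4) T1(4) by simp
  moreover have "\<forall>x\<in>?V - V. sdeg E4 s4 x = 1"
  proof
    fix x assume x: "x \<in> ?V - V"
    have w1u: "w1 \<noteq> u" using S3(1) by auto
    show "sdeg E4 s4 x = 1"
    proof (cases "x = w2")
      case True then show ?thesis using S4(5) by simp
    next
      case F2: False
      show ?thesis
      proof (cases "x = w1")
        case True then show ?thesis using S4(3) S3(5) w1u F2 by simp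
      next
        case F1: False
        show ?thesis
        proof (cases "x = u")
          case True then show ?thesis using S4(4) S3(4) S(5) by simp
        next
          case False
          then have "x \<in> V1 - V" "x \<in> V1 - {c}" using x F1 F2 c by auto
          then show ?thesis using dV1 S(3) T1(5) by simp
        qed
      qed
    qed
  qed
  ultimately show ?case using S4(2) by blast
qed

lemma grow:
  assumes T: "is_tree V E" and c: "c \<in> V"
  shows "\<exists>V' E' s'. is_tree V' E' \<and> V \<subseteq> V' \<and> (\<forall>x\<in>V-{c}. sdeg E' s' x = sdeg E s x) \<and>
     sdeg E' s' c = sdeg E s c + k \<and> (\<forall>x\<in>V'-V. sdeg E' s' x = 1)"
proof (cases "k \<ge> 0")
  case True
  then have "k = int (nat k)" by simp
  then show ?thesis using grow_pos[OF T c, of s "nat k"] by metis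
next
  case False
  then have "k = - int (nat (-k))" by simp
  then show ?thesis using grow_neg[OF T c, of s "nat (-k)"] by (metis diff_conv_add_uminus)
qed

lemma tree_single: "is_tree {0} {}"
  unfolding is_tree_def simple_graph_def connected_graph_def acyclic_graph_def is_cycle_def adj_def
  by auto

lemma realize_ins1:
  assumes "finite F"
  shows "\<exists>V E s. is_tree V E \<and> card V \<ge> 2 \<and> sdeg E s ` V = insert 1 F"
  using assms
proof (induction F rule: finite_induct)
  case empty
  have z: "(0::nat) \<in> {0}" by simp
  obtain w E' s' where S: "w \<notin> {0}" "is_tree (insert w {0}) E'"
     "sdeg E' s' 0 = sdeg {} (\<lambda>_. True) 0 + 1" "sdeg E' s' w = 1"
    using leaf_step[OF tree_single z, of "\<lambda>_. True" True] by auto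
  have "sdeg {} (\<lambda>_. True) 0 = 0" unfolding sdeg_def by simp
  then have "sdeg E' s' ` insert w {0} = insert 1 {}" using S by simp
  moreover have "card (insert w {0}) \<ge> 2" using S(1) by simp
  ultimately show ?case using S(2) by blast
next
  case (insert d F)
  then obtain V E s where T: "is_tree V E" "card V \<ge> 2" "sdeg E s ` V = insert 1 F" by blast
  have fV: "finite V" using T(1) unfolding is_tree_def simple_graph_def by simp
  have "V \<noteq> {}" using T(1) unfolding is_tree_def by simp
  then obtain v where v: "v \<in> V" by blast
  obtain c E1 s1 where S1: "c \<notin> V" "is_tree (insert c V) E1"
     "\<forall>x\<in>V-{v}. sdeg E1 s1 x = sdeg E s x"
     "sdeg E1 s1 v = sdeg E s v + 1" "sdeg E1 s1 c = 1"
    using leaf_step[OF T(1) v, of s True] by auto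
  have v1: "v \<in> insert c V" using v by simp
  obtain V2 E2 s2 where S2: "is_tree V2 E2" "insert c V \<subseteq> V2"
     "\<forall>x\<in>insert c V-{v}. sdeg E2 s2 x = sdeg E1 s1 x"
     "sdeg E2 s2 v = sdeg E1 s1 v + (-1)" "\<forall>x\<in>V2-insert c V. sdeg E2 s2 x = 1"
    using grow[OF S1(2) v1, of s1 "-1"] by blast
  have c2: "c \<in> V2" using S2(2) by blast
  obtain V3 E3 s3 where S3: "is_tree V3 E3" "V2 \<subseteq> V3"
     "\<forall>x\<in>V2-{c}. sdeg E3 s3 x = sdeg E2 s2 x"
     "sdeg E3 s3 c = sdeg E2 s2 c + (d - 1)" "\<forall>x\<in>V3-V2. sdeg E3 s3 x = 1"
    using grow[OF S2(1) c2, of s2 "d - 1"] by blast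
  have cv: "c \<noteq> v" using S1(1) v by auto
  have keep: "sdeg E3 s3 x = sdeg E s x" if x: "x \<in> V" for x
  proof -
    have xc: "x \<noteq> c" using x S1(1) by auto
    have x2: "x \<in> V2 - {c}" using x xc S2(2) by blast
    show ?thesis
    proof (cases "x = v")
      case True
      then show ?thesis using S3(3) x2 S2(4) S1(4) by simp
    next
      case False
      then show ?thesis using S3(3) x2 S2(3) S1(3) x xc by simp
    qed
  qed
  have cd: "sdeg E3 s3 c = d"
  proof -
    have "c \<in> insert c V - {v}" using cv by simp
    then show ?thesis using S3(4) S2(3) S1(5) by simp
  qed
  have new1: "sdeg E3 s3 x = 1" if x: "x \<in> V3" "x \<notin> V" "x \<noteq> c" for x
  proof (cases "x \<in> V2")
    case True
    then have "x \<in> V2 - {c}" "x \<in> V2 - insert c V" using x by auto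
    then show ?thesis using S3(3) S2(5) by simp
  next
    case False
    then show ?thesis using S3(5) x by simp
  qed
  have VV3: "V \<subseteq> V3" "c \<in> V3" using S2(2) S3(2) by auto
  have "sdeg E3 s3 ` V3 = insert 1 (insert d F)"
  proof
    show "sdeg E3 s3 ` V3 \<subseteq> insert 1 (insert d F)"
    proof
      fix y assume "y \<in> sdeg E3 s3 ` V3"
      then obtain x where x: "x \<in> V3" "y = sdeg E3 s3 x" by blast
      show "y \<in> insert 1 (insert d F)"
      proof (cases "x \<in> V")
        case True
        then have "y \<in> sdeg E s ` V" using keep x by simp
        then show ?thesis using T(3) by blast
      next
        case False
        then show ?thesis using x cd new1 by (cases "x = c") auto
      qed
    qed
  next
    have a: "sdeg E3 s3 ` V = sdeg E s ` V" using keep by (simp add: image_def)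
    have "sdeg E3 s3 ` V \<subseteq> sdeg E3 s3 ` V3" using VV3 by blast
    then have "insert 1 F \<subseteq> sdeg E3 s3 ` V3" using a T(3) by simp
    moreover have "d \<in> sdeg E3 s3 ` V3" using cd VV3 by force
    ultimately show "insert 1 (insert d F) \<subseteq> sdeg E3 s3 ` V3" by blast
  qed
  moreover have "card V3 \<ge> 2"
  proof -
    have "finite V3" using S3(1) unfolding is_tree_def simple_graph_def by simp
    then have "card V \<le> card V3" using VV3 card_mono by blast
    then show ?thesis using T(2) by simp
  qed
  ultimately show ?case using S3(1) by blast
qed

lemma leaf_sdeg:
  assumes "{e\<in>E. x \<in> e} = {{x,y}}"
  shows "sdeg E s x = 1 \<or> sdeg E s x = -1"
proof -
  have a: "{e\<in>E. x \<in> e \<and> s e} = {e\<in>{e\<in>E. x \<in> e}. s e}" by auto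
  have b: "{e\<in>E. x \<in> e \<and> \<not> s e} = {e\<in>{e\<in>E. x \<in> e}. \<not> s e}" by auto
  show ?thesis
  proof (cases "s {x,y}")
    case True
    then have "{e\<in>{{x,y}}. s e} = {{x,y}}" "{e\<in>{{x,y}}. \<not> s e} = {}" by auto
    then show ?thesis unfolding sdeg_def a b assms by simp
  next
    case False
    then have "{e\<in>{{x,y}}. s e} = {}" "{e\<in>{{x,y}}. \<not> s e} = {{x,y}}" by auto
    then show ?thesis unfolding sdeg_def a b assms by simp
  qed
qed

definition is_path :: "nat set \<Rightarrow> nat set set \<Rightarrow> nat list \<Rightarrow> bool" where
  "is_path V E cs \<longleftrightarrow> distinct cs \<and> 2 \<le> length cs \<and> set cs \<subseteq> V \<and>
     (\<forall>i. Suc i < length cs \<longrightarrow> adj E (cs ! i) (cs ! Suc i))"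

lemma tree_leaf:
  assumes T: "is_tree V E" and c2: "card V \<ge> 2"
  shows "\<exists>x\<in>V. \<exists>y. {e\<in>E. x \<in> e} = {{x,y}}"
proof -
  have sg: "simple_graph V E" using T unfolding is_tree_def by simp
  have fV: "finite V" using sg unfolding simple_graph_def by simp
  have con: "connected_graph V E" using T unfolding is_tree_def by simp
  have ac: "acyclic_graph E" using T unfolding is_tree_def by simp
  have edge_ne: "a \<noteq> b" if abE: "{a,b} \<in> E" for a b
  proof -
    obtain u v where "{a,b} = {u,v}" "u \<noteq> v" using sg abE unfolding simple_graph_def by meson
    then show ?thesis by (auto simp: doubleton_eq_iff)
  qed
  have edge_in: "a \<in> V" "b \<in> V" if "{a,b} \<in> E" for a b
    using sg_edge_in[OF sg that] by auto
  obtain a b where ab: "a \<in> V" "b \<in> V" "a \<noteq> b"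
  proof -
    have "\<not> card V \<le> Suc 0" using c2 by simp
    then have "\<not> (\<forall>a1\<in>V. \<forall>a2\<in>V. a1 = a2)" using card_le_Suc0_iff_eq[OF fV] by simp
    then show ?thesis using that by blast
  qed
  have "(a,b) \<in> {(x, y). adj E x y}\<^sup>*" using con ab unfolding connected_graph_def by blast
  then obtain c where "(a,c) \<in> {(x, y). adj E x y}" using ab(3)
    by (metis converse_rtranclE)
  then have ac1: "{a,c} \<in> E" unfolding adj_def by simp
  have P0: "is_path V E [a,c]"
    unfolding is_path_def using ac1 edge_ne[OF ac1] edge_in[OF ac1] unfolding adj_def
    by (auto simp: less_Suc_eq)
  have bound: "length cs \<le> card V" if "is_path V E cs" for cs
  proof -
    have "length cs = card (set cs)" using that unfolding is_path_def by (simp add: distinct_card)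
    also have "... \<le> card V" using that fV unfolding is_path_def by (simp add: card_mono)
    finally show ?thesis .
  qed
  have bnd: "\<forall>y. is_path V E y \<longrightarrow> length y < Suc (card V)" using bound by (simp add: less_Suc_eq_le)
  obtain cs where P: "is_path V E cs" and mx: "\<And>ds. is_path V E ds \<Longrightarrow> length ds \<le> length cs"
    using Lattices_Big.ex_has_greatest_nat[OF P0 bnd] by blast
  define n where "n = length cs"
  have n2: "n \<ge> 2" and dist: "distinct cs" and setc: "set cs \<subseteq> V"
    and adjc: "\<And>i. Suc i < n \<Longrightarrow> adj E (cs ! i) (cs ! Suc i)"
    using P unfolding is_path_def n_def by auto
  define x where "x = cs ! (n - 1)"
  define y where "y = cs ! (n - 2)"
  have cne: "cs \<noteq> []" using n2 unfolding n_def by auto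
  have xl: "x = last cs" using cne unfolding x_def n_def by (simp add: last_conv_nth)
  have xV: "x \<in> V" using setc n2 unfolding x_def by (simp add: n_def subset_iff)
  have yx: "{y,x} \<in> E" using adjc[of "n-2"] n2 unfolding x_def y_def adj_def
    by (simp add: Suc_diff_Suc numeral_2_eq_2)
  have "{e\<in>E. x \<in> e} = {{x,y}}"
  proof
    show "{{x,y}} \<subseteq> {e\<in>E. x \<in> e}" using yx by (simp add: insert_commute)
  next
    show "{e\<in>E. x \<in> e} \<subseteq> {{x,y}}"
    proof
      fix e assume e: "e \<in> {e\<in>E. x \<in> e}"
      then have eE: "e \<in> E" by simp
      obtain p q where pq: "e = {p,q}" using sg eE unfolding simple_graph_def by meson
      then obtain z where z: "e = {x,z}" using e by auto
      have ez: "{x,z} \<in> E" using e z by simp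
      have zx: "z \<noteq> x" using edge_ne[OF ez] by simp
      have zV: "z \<in> V" using edge_in[OF ez] by simp
      show "e \<in> {{x,y}}"
      proof (cases "z \<in> set cs")
        case False
        have "is_path V E (cs @ [z])"
          unfolding is_path_def
        proof (intro conjI allI impI)
          show "distinct (cs @ [z])" using dist False by simp
          show "2 \<le> length (cs @ [z])" using n2 unfolding n_def by simp
          show "set (cs @ [z]) \<subseteq> V" using setc zV by simp
          fix i assume i: "Suc i < length (cs @ [z])"
          show "adj E ((cs @ [z]) ! i) ((cs @ [z]) ! Suc i)"
          proof (cases "Suc i < n")
            case True
            then show ?thesis using adjc[OF True] unfolding n_def by (simp add: nth_append)
          next
            case False
            then have ii: "i = n - 1" using i unfolding n_def by simp
            then have i1: "i < length cs" "Suc i = length cs" using n2 unfolding n_def by auto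
            have "(cs @ [z]) ! i = x" using i1(1) ii unfolding x_def by (simp add: nth_append)
            moreover have "(cs @ [z]) ! Suc i = z" using i1(2) by (simp add: nth_append)
            ultimately have "(cs @ [z]) ! i = x" "(cs @ [z]) ! Suc i = z" by simp_all
            then show ?thesis using ez unfolding adj_def by simp
          qed
        qed
        then have "length (cs @ [z]) \<le> length cs" by (rule mx)
        then show ?thesis by simp
      next
        case True
        then obtain k where k: "k < n" "cs ! k = z" unfolding n_def by (auto simp: in_set_conv_nth)
        have kn1: "k \<noteq> n - 1" using k zx unfolding x_def by auto
        show ?thesis
        proof (cases "k = n - 2")
          case True
          then show ?thesis using z k unfolding y_def by simp
        next
          case False
          then have kl: "k + 3 \<le> n" using k kn1 by simp
          have "is_cycle E (drop k cs)"
            unfolding is_cycle_def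
          proof (intro conjI allI impI)
            show "3 \<le> length (drop k cs)" using kl unfolding n_def by simp
            show "distinct (drop k cs)" using dist by simp
            fix i assume "Suc i < length (drop k cs)"
            then have "Suc (k + i) < n" unfolding n_def by simp
            then show "adj E (drop k cs ! i) (drop k cs ! Suc i)" using adjc unfolding n_def by simp
          next
            have "last (drop k cs) = x" using xl k unfolding n_def by simp
            moreover have "hd (drop k cs) = z" using k unfolding n_def by (simp add: hd_drop_conv_nth)
            ultimately show "adj E (last (drop k cs)) (hd (drop k cs))" using ez unfolding adj_def by simp
          qed
          then show ?thesis using ac unfolding acyclic_graph_def by blast
        qed
      qed
    qed
  qed
  then show ?thesis using xV by blast
qed

theorem mainTheorem1:
  fixes D :: "int set"
  assumes "finite D" and "D \<noteq> {}"
  shows "(\<exists>V E s. is_tree V E \<and> card V \<ge> 2 \<and> realizes V E s D) \<longleftrightarrow> (-1 \<in> D \<or> 1 \<in> D)"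
proof
  assume "\<exists>V E s. is_tree V E \<and> card V \<ge> 2 \<and> realizes V E s D"
  then obtain V E s where T: "is_tree V E" "card V \<ge> 2" "D = sdeg E s ` V"
    unfolding realizes_def by blast
  obtain x y where xy: "x \<in> V" "{e\<in>E. x \<in> e} = {{x,y}}" using tree_leaf[OF T(1,2)] by blast
  have xd: "sdeg E s x \<in> D" using T(3) xy(1) by simp
  have "sdeg E s x = 1 \<or> sdeg E s x = -1" by (rule leaf_sdeg[OF xy(2)])
  then show "-1 \<in> D \<or> 1 \<in> D" using xd by auto
next
  assume h: "-1 \<in> D \<or> 1 \<in> D"
  show "\<exists>V E s. is_tree V E \<and> card V \<ge> 2 \<and> realizes V E s D"
  proof (cases "1 \<in> D")
    case True
    obtain V E s where T: "is_tree V E" "card V \<ge> 2" "sdeg E s ` V = insert 1 D"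
      using realize_ins1[OF assms(1)] by blast
    have "insert 1 D = D" using True by (rule insert_absorb)
    then have "realizes V E s D" unfolding realizes_def using T(3) by simp
    then show ?thesis using T(1,2) by blast
  next
    case False
    then have "-1 \<in> D" using h by simp
    then have m: "1 \<in> uminus ` D" by (rule rev_image_eqI) simp
    obtain V E s where T: "is_tree V E" "card V \<ge> 2" "sdeg E s ` V = insert 1 (uminus ` D)"
      using realize_ins1[of "uminus ` D"] assms(1) by blast
    have neg: "sdeg E (\<lambda>e. \<not> s e) v = - sdeg E s v" for v unfolding sdeg_def by simp
    have "sdeg E (\<lambda>e. \<not> s e) ` V = uminus ` (sdeg E s ` V)" using neg by (auto simp: image_def)
    also have "... = D" using T(3) m by (simp add: insert_absorb image_image)
    finally have "realizes V E (\<lambda>e. \<not> s e) D" unfolding realizes_def by simp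
    then show ?thesis using T(1,2) by blast
  qed
qed

end
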